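(* Let $\Gamma$ be a symmetric, folded, idempotent family of Boolean promise relations such that $\operatorname{Maj}_L\notin\operatorname{poly}(\Gamma)$ for some odd positive integer $L$. Then there is a promise relation $(P,Q)$ with $\operatorname{poly}(\Gamma)\subseteq\operatorname{poly}(P,Q)$ of one of the following two forms: either $P=\operatorname{Ham}_k(\{(k+1)/2\})$, $Q=\operatorname{Ham}_k(\{0,1,\dots,k-1\})$ for some odd $k\ge 3$; or $P=\operatorname{Ham}_k(\{1,k\})$, $Q=\operatorname{Ham}_k(\{0,1,\dots,k\}\setminus\{b\})$ for some $k\ge 3$ and $b\in\{2,\dots,k-1\}$.
   Context: Domain $\{0,1\}$. A promise relation is a pair $(P,Q)$ with $P\subseteq Q\subseteq\{0,1\}^k$. $f:\{0,1\}^L\to\{0,1\}$ is a weak polymorphism of $(P,Q)$ if for all $x^{(1)},\dots,x^{(L)}\in P$, $(f(x^{(1)}_1,\dots,x^{(L)}_1),\dots,f(x^{(1)}_k,\dots,x^{(L)}_k))\in Q$; $\operatorname{poly}(\Gamma)$ is the set of functions that are weak polymorphisms of every member of $\Gamma$. $\Gamma$ is symmetric if every relation appearing in it is invariant under coordinate permutations; folded if each $f\in\operatorname{poly}(\Gamma)$ satisfies $f(\bar x)=\neg f(x)$; idempotent if each $f\in\operatorname{poly}(\Gamma)$ satisfies $f(0,\dots,0)=0$, $f(1,\dots,1)=1$. $\operatorname{Ham}_k(S)=\{x\in\{0,1\}^k:|x|\in S\}$ where $|x|$ is the Hamming weight. For odd $L$, $\operatorname{Maj}_L(x)=1$ iff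 $\sum_i x_i>L/2$. *)

theory Defs
  imports "HOL-Combinatorics.Permutations"
begin

text \<open>Boolean tuples are lists of bool (False = 0, True = 1).
 A function f : {0,1}^L -> {0,1} is a function on bool lists, only evaluated on lists of length L.\<close>

type_synonym promise_rel = "nat \<times> bool list set \<times> bool list set"

definition wf_promise_rel :: "promise_rel \<Rightarrow> bool" where
  "wf_promise_rel R = (case R of (k, P, Q) \<Rightarrow> P \<subseteq> Q \<and> Q \<subseteq> {x. length x = k})"

definition weak_poly :: "promise_rel \<Rightarrow> nat \<Rightarrow> (bool list \<Rightarrow> bool) \<Rightarrow> bool" where
  "weak_poly R L f = (case R of (k, P, Q) \<Rightarrow>
     (\<forall>x :: nat \<Rightarrow> bool list. (\<forall>i<L. x i \<in> P) \<longrightarrow>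
        map (\<lambda>j. f (map (\<lambda>i. x i ! j) [0..<L])) [0..<k] \<in> Q))"

definition in_poly :: "promise_rel set \<Rightarrow> nat \<Rightarrow> (bool list \<Rightarrow> bool) \<Rightarrow> bool" where
  "in_poly \<Gamma> L f = (1 \<le> L \<and> (\<forall>R\<in>\<Gamma>. weak_poly R L f))"

definition perm_invariant :: "nat \<Rightarrow> bool list set \<Rightarrow> bool" where
  "perm_invariant k S = (\<forall>\<sigma> x. \<sigma> permutes {..<k} \<longrightarrow> x \<in> S \<longrightarrow>
      map (\<lambda>j. x ! \<sigma> j) [0..<k] \<in> S)"

definition symmetric_fam :: "promise_rel set \<Rightarrow> bool" where
  "symmetric_fam \<Gamma> = (\<forall>(k, P, Q)\<in>\<Gamma>. perm_invariant k P \<and> perm_invariant k Q)"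

definition folded_fam :: "promise_rel set \<Rightarrow> bool" where
  "folded_fam \<Gamma> = (\<forall>L f. in_poly \<Gamma> L f \<longrightarrow>
      (\<forall>x. length x = L \<longrightarrow> f (map Not x) = (\<not> f x)))"

definition idempotent_fam :: "promise_rel set \<Rightarrow> bool" where
  "idempotent_fam \<Gamma> = (\<forall>L f. in_poly \<Gamma> L f \<longrightarrow>
      f (replicate L False) = False \<and> f (replicate L True) = True)"

definition hweight :: "bool list \<Rightarrow> nat" where
  "hweight x = length (filter id x)"

definition Ham :: "nat \<Rightarrow> nat set \<Rightarrow> bool list set" where
  "Ham k S = {x. length x = k \<and> hweight x \<in> S}"

definition Maj :: "nat \<Rightarrow> bool list \<Rightarrow> bool" where
  "Maj L x = (2 * hweight x > L)"

end

theory Submission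
  imports Defs
begin

lemma hweight_sum: "hweight xs = (\<Sum>j<length xs. if xs ! j then 1 else 0)"
  by (induct xs) (simp_all add: hweight_def sum.lessThan_Suc_shift del: sum.lessThan_Suc)

lemma hweight_le: "hweight xs \<le> length xs"
  unfolding hweight_def by simp

lemma hweight_append[simp]: "hweight (xs @ ys) = hweight xs + hweight ys"
  unfolding hweight_def by simp

lemma hweight_rep_T[simp]: "hweight (replicate n True) = n"
  unfolding hweight_def by simp
lemma hweight_rep_F[simp]: "hweight (replicate n False) = 0"
  unfolding hweight_def by simp

lemma hweight_not: "hweight (map Not xs) = length xs - hweight xs"
proof -
  have "length (filter id (map Not xs)) = length (filter (\<lambda>x. \<not> id x) xs)"
    by (induct xs) auto
  moreover have "length(filter id xs) + length(filter (\<lambda>x. \<not>id x) xs) = length xs"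
    by (rule sum_length_filter_compl)
  ultimately show ?thesis unfolding hweight_def by simp
qed

lemma perm_same_weight:
  assumes "perm_invariant k S" "z \<in> S" "length z = k" "length y = k" "hweight y = hweight z"
  shows "y \<in> S"
proof -
  have c: "count (mset y) v = count (mset z) v" for v
  proof (cases v)
    case True
    then show ?thesis using assms(5) unfolding hweight_def count_mset count_list_eq_length_filter
      by (simp add: filter_cong[OF refl, of _ "(=) True" id])
  next
    case False
    have "length (filter id y) + length (filter (\<lambda>x. \<not> id x) y) = length y"
         "length (filter id z) + length (filter (\<lambda>x. \<not> id x) z) = length z"
      by (rule sum_length_filter_compl)+
    moreover have "filter ((=) False) y = filter (\<lambda>x. \<not> id x) y"
                  "filter ((=) False) z = filter (\<lambda>x. \<not> id x) z"
      by (rule filter_cong; auto)+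
    ultimately show ?thesis using assms(3-5) False unfolding hweight_def count_mset count_list_eq_length_filter by simp
  qed
  have "mset y = mset z" using c by (simp add: multiset_eq_iff)
  then obtain p where p: "p permutes {..<length z}" "permute_list p z = y"
    by (rule mset_eq_permutation)
  then show ?thesis using assms(1,2,3) unfolding perm_invariant_def permute_list_def by metis
qed

definition G :: "bool \<Rightarrow> nat \<Rightarrow> nat \<Rightarrow> bool list \<Rightarrow> bool list" where
  "G neg c1 c0 u = map (\<lambda>v. v \<noteq> neg) u @ replicate c1 True @ replicate c0 False"

lemma length_G[simp]: "length (G neg c1 c0 u) = length u + c1 + c0"
  unfolding G_def by simp

lemma hweight_G: "hweight (G neg c1 c0 u) = (if neg then length u - hweight u else hweight u) + c1"
proof (cases neg)
  case True
  then have "map (\<lambda>v. v \<noteq> neg) u = map Not u" by auto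
  then show ?thesis using True unfolding G_def by (simp add: hweight_not)
next
  case False
  then show ?thesis unfolding G_def by simp
qed

lemma G_nth1: "j < length u \<Longrightarrow> G neg c1 c0 u ! j = (u ! j \<noteq> neg)"
  unfolding G_def by (simp add: nth_append)
lemma G_nth2: "length u \<le> j \<Longrightarrow> j < length u + c1 \<Longrightarrow> G neg c1 c0 u ! j = True"
  unfolding G_def by (simp add: nth_append)
lemma G_nth3: "length u + c1 \<le> j \<Longrightarrow> j < length u + c1 + c0 \<Longrightarrow> G neg c1 c0 u ! j = False"
  unfolding G_def by (simp add: nth_append)

lemma gadget:
  assumes wp: "weak_poly (k,P,Q) N f"
    and idem: "f (replicate N False) = False" "f (replicate N True) = True"
    and fold: "\<forall>x. length x = N \<longrightarrow> f (map Not x) = (\<not> f x)"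
    and k: "n + c1 + c0 = k"
    and xs: "\<forall>i<N. length (x i) = n \<and> G neg c1 c0 (x i) \<in> P"
  shows "G neg c1 c0 (map (\<lambda>j. f (map (\<lambda>i. x i ! j) [0..<N])) [0..<n]) \<in> Q"
proof -
  let ?x = "\<lambda>i. G neg c1 c0 (x i)"
  have "map (\<lambda>j. f (map (\<lambda>i. ?x i ! j) [0..<N])) [0..<k] \<in> Q"
    using wp xs unfolding weak_poly_def by auto
  moreover have "map (\<lambda>j. f (map (\<lambda>i. ?x i ! j) [0..<N])) [0..<k]
      = G neg c1 c0 (map (\<lambda>j. f (map (\<lambda>i. x i ! j) [0..<N])) [0..<n])"
  proof (rule nth_equalityI)
    show "length (map (\<lambda>j. f (map (\<lambda>i. ?x i ! j) [0..<N])) [0..<k]) =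
      length (G neg c1 c0 (map (\<lambda>j. f (map (\<lambda>i. x i ! j) [0..<N])) [0..<n]))"
      using k by simp
  next
    fix j assume "j < length (map (\<lambda>j. f (map (\<lambda>i. ?x i ! j) [0..<N])) [0..<k])"
    then have j: "j < k" by simp
    show "map (\<lambda>j. f (map (\<lambda>i. ?x i ! j) [0..<N])) [0..<k] ! j =
      G neg c1 c0 (map (\<lambda>j. f (map (\<lambda>i. x i ! j) [0..<N])) [0..<n]) ! j"
    proof -
      have lhs: "map (\<lambda>j. f (map (\<lambda>i. ?x i ! j) [0..<N])) [0..<k] ! j = f (map (\<lambda>i. ?x i ! j) [0..<N])"
        using j by simp
      consider (a) "j < n" | (b) "n \<le> j" "j < n + c1" | (c) "n + c1 \<le> j" by linarith
      then show ?thesis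
      proof cases
        case a
        have col: "map (\<lambda>i. ?x i ! j) [0..<N] = map (\<lambda>v. v \<noteq> neg) (map (\<lambda>i. x i ! j) [0..<N])"
          using a xs by (simp add: G_nth1)
        have "f (map (\<lambda>v. v \<noteq> neg) (map (\<lambda>i. x i ! j) [0..<N])) = (f (map (\<lambda>i. x i ! j) [0..<N]) \<noteq> neg)"
        proof (cases neg)
          case True
          have "map (\<lambda>v. v \<noteq> neg) (map (\<lambda>i. x i ! j) [0..<N]) = map Not (map (\<lambda>i. x i ! j) [0..<N])"
            using True by simp
          then show ?thesis using fold[rule_format, of "map (\<lambda>i. x i ! j) [0..<N]"] True by simp
        qed simp
        then show ?thesis using lhs col a by (simp add: G_nth1)
      next
        case b
        have col: "map (\<lambda>i. ?x i ! j) [0..<N] = replicate N True"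
        proof -
          have "map (\<lambda>i. ?x i ! j) [0..<N] = map (\<lambda>i. True) [0..<N]"
            by (rule map_cong) (use b xs in \<open>auto simp: G_nth2\<close>)
          then show ?thesis by (simp add: map_replicate_const)
        qed
        show ?thesis using lhs col b idem by (simp add: G_nth2)
      next
        case c
        have col: "map (\<lambda>i. ?x i ! j) [0..<N] = replicate N False"
        proof -
          have "map (\<lambda>i. ?x i ! j) [0..<N] = map (\<lambda>i. False) [0..<N]"
            by (rule map_cong) (use c j k xs in \<open>auto simp: G_nth3\<close>)
          then show ?thesis by (simp add: map_replicate_const)
        qed
        show ?thesis using lhs col c j k idem by (simp add: G_nth3)
      qed
    qed
  qed
  ultimately show ?thesis by simp
qed

lemma comb:
  fixes x :: "nat \<Rightarrow> bool list"
  assumes L: "odd L" "L > 0"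
    and len: "\<forall>i<L. length (x i) = k"
    and w: "w = hweight (map (\<lambda>j. Maj L (map (\<lambda>i. x i ! j) [0..<L])) [0..<k])"
    and ne: "\<forall>i<L. hweight (x i) \<noteq> w"
  shows "(\<exists>i<L. hweight (x i) < w \<and> w < 2 * hweight (x i))
    \<or> (\<exists>i<L. 2 * hweight (x i) < k + w \<and> w < hweight (x i))
    \<or> (\<exists>i<L. \<exists>i'<L. hweight (x i) < w \<and> w < hweight (x i') \<and> (1 \<le> hweight (x i) \<or> hweight (x i') < k))"
proof (rule ccontr)
  assume H: "\<not> ?thesis"
  define a where "a i = hweight (x i)" for i
  define b where "b i = (\<Sum>j<k. if x i ! j then 0 else 1::nat)" for i
  define c where "c j = (\<Sum>i<L. if x i ! j then 1 else 0::nat)" for j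
  define z where "z j = (\<Sum>i<L. if x i ! j then 0 else 1::nat)" for j
  define w' where "w' = (\<Sum>j<k. if 2 * c j > L then 0 else 1::nat)"
  have a_sum: "a i = (\<Sum>j<k. if x i ! j then 1 else 0)" if "i < L" for i
    using that len hweight_sum[of "x i"] unfolding a_def by simp
  have ab: "a i + b i = k" if "i < L" for i
  proof -
    have "a i + b i = (\<Sum>j<k. (if x i ! j then 1 else 0) + (if x i ! j then 0 else 1::nat))"
      using a_sum[OF that] unfolding b_def by (simp add: sum.distrib)
    also have "\<dots> = (\<Sum>j<k. 1)" by (rule sum.cong) auto
    finally show ?thesis by simp
  qed
  have cz: "c j + z j = L" for j
  proof -
    have "c j + z j = (\<Sum>i<L. (if x i ! j then 1 else 0) + (if x i ! j then 0 else 1::nat))"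
      unfolding c_def z_def by (simp add: sum.distrib)
    also have "\<dots> = (\<Sum>i<L. 1)" by (rule sum.cong) auto
    finally show ?thesis by simp
  qed
  have F1: "(\<Sum>i<L. a i) = (\<Sum>j<k. c j)"
    using a_sum unfolding c_def by (simp add: sum.swap[of _ "{..<k}"])
  have F2: "(\<Sum>i<L. b i) = (\<Sum>j<k. z j)"
    unfolding b_def z_def by (rule sum.swap)
  have colw: "hweight (map (\<lambda>i. x i ! j) [0..<L]) = c j" for j
    using hweight_sum[of "map (\<lambda>i. x i ! j) [0..<L]"] unfolding c_def by simp
  have F4: "w = (\<Sum>j<k. if 2 * c j > L then 1 else 0)"
    using w hweight_sum[of "map (\<lambda>j. Maj L (map (\<lambda>i. x i ! j) [0..<L])) [0..<k]"]
    by (simp add: Maj_def colw)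
  have ww': "w + w' = k"
  proof -
    have "w + w' = (\<Sum>j<k. (if 2 * c j > L then 1 else 0) + (if 2 * c j > L then 0 else 1::nat))"
      using F4 unfolding w'_def by (simp add: sum.distrib)
    also have "\<dots> = (\<Sum>j<k. 1)" by (rule sum.cong) auto
    finally show ?thesis by simp
  qed
  have F5: "(L + 1) * w \<le> 2 * (\<Sum>j<k. c j)"
  proof -
    have "(L + 1) * w = (\<Sum>j<k. if 2 * c j > L then L + 1 else 0)"
      using F4 by (simp add: sum_distrib_left if_distrib cong: if_cong)
    also have "\<dots> \<le> (\<Sum>j<k. 2 * c j)"
    proof (rule sum_mono)
      fix j show "(if 2 * c j > L then L + 1 else 0) \<le> 2 * c j"
        using L(1) by (auto elim!: oddE)
    qed
    finally show ?thesis by (simp add: sum_distrib_left)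
  qed
  have F6: "(L + 1) * w' \<le> 2 * (\<Sum>j<k. z j)"
  proof -
    have "(L + 1) * w' = (\<Sum>j<k. if 2 * c j > L then 0 else L + 1)"
      unfolding w'_def by (simp add: sum_distrib_left if_distrib cong: if_cong)
    also have "\<dots> \<le> (\<Sum>j<k. 2 * z j)"
    proof (rule sum_mono)
      fix j show "(if 2 * c j > L then 0 else L + 1) \<le> 2 * z j"
        using L(1) cz[of j] by (auto elim!: oddE; presburger)
    qed
    finally show ?thesis by (simp add: sum_distrib_left)
  qed
  have H1: "\<not> (\<exists>i<L. a i < w \<and> w < 2 * a i)"
    and H2: "\<not> (\<exists>i<L. 2 * a i < k + w \<and> w < a i)"
    and H3: "\<not> (\<exists>i<L. \<exists>i'<L. a i < w \<and> w < a i' \<and> (1 \<le> a i \<or> a i' < k))"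
    using H unfolding a_def by blast+
  have lo: "a i < w \<Longrightarrow> 2 * a i \<le> w" if "i < L" for i
    using H1 that by (meson not_le)
  have hi: "w < a i \<Longrightarrow> k + w \<le> 2 * a i" if "i < L" for i
    using H2 that by (meson not_le)
  have ak: "a i \<le> k" if "i < L" for i
    using hweight_le[of "x i"] len that unfolding a_def by simp
  have anw: "a i \<noteq> w" if "i < L" for i using ne that unfolding a_def by simp
  show False
  proof (cases "\<forall>i<L. a i < w")
    case True
    have "2 * (\<Sum>i<L. a i) = (\<Sum>i<L. 2 * a i)" by (simp add: sum_distrib_left)
    also have "\<dots> \<le> (\<Sum>i<L. w)" by (rule sum_mono) (use True lo in auto)
    finally have "2 * (\<Sum>i<L. a i) \<le> L * w" by simp
    with F5 F1 have "w = 0" by simp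
    with True L(2) show False by auto
  next
    case nlo: False
    show False
    proof (cases "\<forall>i<L. w < a i")
      case True
      have "2 * (\<Sum>i<L. b i) = (\<Sum>i<L. 2 * b i)" by (simp add: sum_distrib_left)
      also have "\<dots> \<le> (\<Sum>i<L. w')"
      proof (rule sum_mono)
        fix i assume "i \<in> {..<L}"
        then have "i < L" by simp
        then show "2 * b i \<le> w'" using True hi[of i] ab[of i] ww' by simp
      qed
      finally have "2 * (\<Sum>i<L. b i) \<le> L * w'" by simp
      with F6 F2 have "w' = 0" by simp
      with True L(2) ak[of 0] ww' show False by auto
    next
      case nhi: False
      obtain i0 where i0: "i0 < L" "a i0 < w" using nhi anw by force
      obtain i1 where i1: "i1 < L" "w < a i1" using nlo anw by force
      have r0: "a i = 0" if "i < L" "a i < w" for i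
        using H3 that i1 by (meson less_one not_le)
      have r1: "a i = k" if "i < L" "w < a i" for i
        using H3 that i0 ak[OF that(1)] by (meson le_neq_implies_less less_one not_le)
      define C where "C = (\<Sum>i<L. if a i = k then 1 else 0::nat)"
      have xij: "x i ! j = (a i = k)" if "i < L" "j < k" for i j
      proof (cases "a i < w")
        case True
        then have "a i = 0" using r0 that by simp
        then have "(\<Sum>j<k. if x i ! j then 1 else 0::nat) = 0" using a_sum that by simp
        then have "\<not> x i ! j" using that(2) by (simp add: sum_eq_0_iff) (metis lessThan_iff one_neq_zero)
        moreover have "a i \<noteq> k" using True i1 ak[of i1] by linarith
        ultimately show ?thesis by simp
      next
        case False
        then have "a i = k" using r1 anw that by force
        then have "b i = 0" using ab[OF that(1)] by simp
        then have "x i ! j" using that(2) unfolding b_def by (simp add: sum_eq_0_iff) (metis lessThan_iff one_neq_zero)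
        then show ?thesis using \<open>a i = k\<close> by simp
      qed
      have "c j = C" if "j < k" for j
        unfolding c_def C_def by (rule sum.cong) (use xij that in auto)
      then have "w = (\<Sum>j<k. if 2 * C > L then 1 else 0)" using F4 by simp
      then have "w = 0 \<or> w = k" by (cases "2 * C > L") auto
      then show False using i0 i1 ak by fastforce
    qed
  qed
qed

lemma target:
  assumes wp: "weak_poly (k,P,Q) N f"
    and idem: "f (replicate N False) = False" "f (replicate N True) = True"
    and fold: "\<forall>x. length x = N \<longrightarrow> f (map Not x) = (\<not> f x)"
    and k: "n + cA + cB = k" and N: "1 \<le> N"
    and inP: "\<forall>u. length u = n \<longrightarrow> u \<in> P' \<longrightarrow> G neg cA cB u \<in> P"
    and outQ: "\<forall>u. length u = n \<longrightarrow> G neg cA cB u \<in> Q \<longrightarrow> u \<in> Q'"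
    and P'len: "\<forall>u\<in>P'. length u = n"
  shows "in_poly {(n,P',Q')} N f"
proof -
  have "weak_poly (n,P',Q') N f" unfolding weak_poly_def
  proof (simp, intro allI impI)
  fix x assume x: "\<forall>i<N. x i \<in> P'"
  have "G neg cA cB (map (\<lambda>j. f (map (\<lambda>i. x i ! j) [0..<N])) [0..<n]) \<in> Q"
    by (rule gadget[OF wp idem fold k]) (use x inP P'len in auto)
  then show "map (\<lambda>j. f (map (\<lambda>i. x i ! j) [0..<N])) [0..<n] \<in> Q'"
    using outQ by simp
  qed
  then show ?thesis using N unfolding in_poly_def by simp
qed

lemma Ham_len: "\<forall>u\<in>Ham n S. length u = n" unfolding Ham_def by simp

theorem lemma4p6:
  fixes \<Gamma> :: "promise_rel set"
  assumes "\<forall>R\<in>\<Gamma>. wf_promise_rel R"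
    and "symmetric_fam \<Gamma>" and "folded_fam \<Gamma>" and "idempotent_fam \<Gamma>"
    and "\<exists>L. odd L \<and> L > 0 \<and> \<not> in_poly \<Gamma> L (Maj L)"
  shows "\<exists>k P Q. (\<forall>L f. in_poly \<Gamma> L f \<longrightarrow> in_poly {(k, P, Q)} L f) \<and>
     ((odd k \<and> k \<ge> 3 \<and> P = Ham k {(k + 1) div 2} \<and> Q = Ham k {0..<k}) \<or>
      (\<exists>b. k \<ge> 3 \<and> b \<in> {2..k - 1} \<and> P = Ham k {1, k} \<and> Q = Ham k ({0..k} - {b})))"
proof -
  obtain L where L: "odd L" "L > 0" "\<not> in_poly \<Gamma> L (Maj L)" using assms(5) by blast
  then obtain R where R: "R \<in> \<Gamma>" "\<not> weak_poly R L (Maj L)" unfolding in_poly_def by auto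
  obtain k P Q where kPQ: "R = (k,P,Q)" by (cases R) auto
  obtain x where x: "\<forall>i<L. x i \<in> P"
    and y: "map (\<lambda>j. Maj L (map (\<lambda>i. x i ! j) [0..<L])) [0..<k] \<notin> Q"
    using R(2) unfolding kPQ weak_poly_def by auto
  define y where "y = map (\<lambda>j. Maj L (map (\<lambda>i. x i ! j) [0..<L])) [0..<k]"
  have PQ: "P \<subseteq> Q" "Q \<subseteq> {x. length x = k}"
    using assms(1) R(1) unfolding kPQ wf_promise_rel_def by auto
  have sym: "perm_invariant k P" "perm_invariant k Q"
    using assms(2) R(1) unfolding kPQ symmetric_fam_def by auto
  have len: "\<forall>i<L. length (x i) = k" using x PQ by auto
  define w where "w = hweight y"
  have ly: "length y = k" unfolding y_def by simp
  have wk: "w \<le> k" using hweight_le[of y] ly unfolding w_def by simp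
  have notw: "hweight u \<noteq> w" if "u \<in> Q" for u
  proof
    assume "hweight u = w"
    then have "y \<in> Q" using perm_same_weight[OF sym(2) that _ ly] PQ that unfolding w_def by auto
    then show False using y unfolding y_def by simp
  qed
  have ne: "\<forall>i<L. hweight (x i) \<noteq> w" using notw x PQ by auto
  have memP: "u \<in> P" if "i < L" "length u = k" "hweight u = hweight (x i)" for u i
    using perm_same_weight[OF sym(1) _ _ that(2,3)] x len that(1) by auto
  have key: "weak_poly (k,P,Q) N f \<and> f (replicate N False) = False \<and> f (replicate N True) = True
      \<and> (\<forall>x. length x = N \<longrightarrow> f (map Not x) = (\<not> f x)) \<and> 1 \<le> N" if "in_poly \<Gamma> N f" for N f
    using that assms(3,4) R(1) unfolding kPQ folded_fam_def idempotent_fam_def in_poly_def by auto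
  have C: "(\<exists>i<L. hweight (x i) < w \<and> w < 2 * hweight (x i))
    \<or> (\<exists>i<L. 2 * hweight (x i) < k + w \<and> w < hweight (x i))
    \<or> (\<exists>i<L. \<exists>i'<L. hweight (x i) < w \<and> w < hweight (x i') \<and> (1 \<le> hweight (x i) \<or> hweight (x i') < k))"
    by (rule comb[OF L(1,2) len]) (use ne in \<open>simp_all add: w_def y_def\<close>)
  then consider (c1) i where "i < L" "hweight (x i) < w" "w < 2 * hweight (x i)"
    | (c2) i where "i < L" "2 * hweight (x i) < k + w" "w < hweight (x i)"
    | (c3) i i' where "i < L" "i' < L" "hweight (x i) < w" "w < hweight (x i')"
        "1 \<le> hweight (x i) \<or> hweight (x i') < k"
    by blast
  then show ?thesis
  proof cases
    fix i assume i: "i < L" and a1: "hweight (x i) < w" and a2: "w < 2 * hweight (x i)"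
    define a where "a = hweight (x i)"
    define n where "n = 2 * w + 1 - 2 * a"
    have inc: "in_poly {(n, Ham n {(n + 1) div 2}, Ham n {0..<n})} N f" if "in_poly \<Gamma> N f" for N f
    proof (rule target[where neg=False and cA="2*a - 1 - w" and cB="k - w"])
      show "n + (2 * a - 1 - w) + (k - w) = k" using a1 a2 wk unfolding n_def a_def by linarith
      show "\<forall>u. length u = n \<longrightarrow> u \<in> Ham n {(n + 1) div 2} \<longrightarrow> G False (2 * a - 1 - w) (k - w) u \<in> P"
      proof (intro allI impI)
        fix u assume "length u = n" "u \<in> Ham n {(n + 1) div 2}"
        then have "hweight u = w + 1 - a" unfolding Ham_def n_def using a1 a2 unfolding a_def by auto
        then show "G False (2 * a - 1 - w) (k - w) u \<in> P"
          apply - apply (rule memP[OF i]) using \<open>length u = n\<close> a1 a2 wk unfolding hweight_G n_def a_def by simp_all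
      qed
      show "\<forall>u. length u = n \<longrightarrow> G False (2 * a - 1 - w) (k - w) u \<in> Q \<longrightarrow> u \<in> Ham n {0..<n}"
      proof (intro allI impI)
        fix u assume u: "length u = n" "G False (2 * a - 1 - w) (k - w) u \<in> Q"
        have "hweight u \<noteq> n" using notw[OF u(2)] a1 a2 unfolding hweight_G n_def a_def by simp
        then show "u \<in> Ham n {0..<n}" using hweight_le[of u] u(1) unfolding Ham_def by simp
      qed
    qed (use key[OF that] Ham_len in auto)
    show ?thesis
      by (rule exI[of _ n], rule exI, rule exI, rule conjI[OF _ disjI1])
         (use inc a1 a2 in \<open>auto simp: n_def a_def\<close>)
  next
    fix i assume i: "i < L" and a1: "2 * hweight (x i) < k + w" and a2: "w < hweight (x i)"
    define a where "a = hweight (x i)"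
    define n where "n = 2 * a + 1 - 2 * w"
    have inc: "in_poly {(n, Ham n {(n + 1) div 2}, Ham n {0..<n})} N f" if "in_poly \<Gamma> N f" for N f
    proof (rule target[where neg=True and cA="w" and cB="k + w - 2 * a - 1"])
      show "n + w + (k + w - 2 * a - 1) = k" using a1 a2 wk unfolding n_def a_def by linarith
      show "\<forall>u. length u = n \<longrightarrow> u \<in> Ham n {(n + 1) div 2} \<longrightarrow> G True w (k + w - 2 * a - 1) u \<in> P"
      proof (intro allI impI)
        fix u assume "length u = n" "u \<in> Ham n {(n + 1) div 2}"
        then have "hweight u = a + 1 - w" unfolding Ham_def n_def using a1 a2 unfolding a_def by auto
        then show "G True w (k + w - 2 * a - 1) u \<in> P"
          apply - apply (rule memP[OF i]) using \<open>length u = n\<close> a1 a2 wk unfolding hweight_G n_def a_def by simp_all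
      qed
      show "\<forall>u. length u = n \<longrightarrow> G True w (k + w - 2 * a - 1) u \<in> Q \<longrightarrow> u \<in> Ham n {0..<n}"
      proof (intro allI impI)
        fix u assume u: "length u = n" "G True w (k + w - 2 * a - 1) u \<in> Q"
        have "hweight u \<noteq> n" using notw[OF u(2)] u(1) hweight_le[of u] unfolding hweight_G by auto
        then show "u \<in> Ham n {0..<n}" using hweight_le[of u] u(1) unfolding Ham_def by simp
      qed
    qed (use key[OF that] Ham_len in auto)
    show ?thesis
      by (rule exI[of _ n], rule exI, rule exI, rule conjI[OF _ disjI1])
         (use inc a1 a2 in \<open>auto simp: n_def a_def\<close>)
  next
    fix i i' assume i: "i < L" "i' < L" and a1: "hweight (x i) < w" and a2: "w < hweight (x i')"
      and a3: "1 \<le> hweight (x i) \<or> hweight (x i') < k"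
    define a where "a = hweight (x i)"
    define c where "c = hweight (x i')"
    define n where "n = c - a + 1"
    have ck: "c \<le> k" using hweight_le[of "x i'"] len i unfolding c_def by simp_all
    from a3 show ?thesis
    proof
      assume a3: "1 \<le> hweight (x i)"
      define b where "b = w - a + 1"
      have inc: "in_poly {(n, Ham n {1, n}, Ham n ({0..n} - {b}))} N f" if "in_poly \<Gamma> N f" for N f
      proof (rule target[where neg=False and cA="a - 1" and cB="k - c"])
        show "n + (a - 1) + (k - c) = k" using a1 a2 a3 ck unfolding n_def a_def c_def by linarith
        show "\<forall>u. length u = n \<longrightarrow> u \<in> Ham n {1, n} \<longrightarrow> G False (a - 1) (k - c) u \<in> P"
        proof (intro allI impI)
          fix u assume u: "length u = n" "u \<in> Ham n {1, n}"
          then have "hweight u = 1 \<or> hweight u = n" unfolding Ham_def by auto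
          then show "G False (a - 1) (k - c) u \<in> P"
          proof
            assume "hweight u = 1"
            then show ?thesis apply - apply (rule memP[OF i(1)]) using u(1) a1 a2 a3 ck
              unfolding hweight_G n_def a_def c_def by simp_all
          next
            assume "hweight u = n"
            then show ?thesis apply - apply (rule memP[OF i(2)]) using u(1) a1 a2 a3 ck
              unfolding hweight_G n_def a_def c_def by simp_all
          qed
        qed
        show "\<forall>u. length u = n \<longrightarrow> G False (a - 1) (k - c) u \<in> Q \<longrightarrow> u \<in> Ham n ({0..n} - {b})"
        proof (intro allI impI)
          fix u assume u: "length u = n" "G False (a - 1) (k - c) u \<in> Q"
          have "hweight u \<noteq> b" using notw[OF u(2)] a1 a2 a3 unfolding hweight_G b_def a_def by auto
          then show "u \<in> Ham n ({0..n} - {b})" using hweight_le[of u] u(1) unfolding Ham_def by simp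
        qed
      qed (use key[OF that] Ham_len in auto)
      show ?thesis
        apply (rule exI[of _ n], rule exI, rule exI, rule conjI)
         apply (use inc in blast)
        apply (rule disjI2, rule exI[of _ b])
        using a1 a2 a3 by (auto simp: n_def a_def c_def b_def)
    next
      assume a3: "hweight (x i') < k"
      define b where "b = c - w + 1"
      have inc: "in_poly {(n, Ham n {1, n}, Ham n ({0..n} - {b}))} N f" if "in_poly \<Gamma> N f" for N f
      proof (rule target[where neg=True and cA="a" and cB="k - c - 1"])
        show "n + a + (k - c - 1) = k" using a1 a2 a3 ck unfolding n_def a_def c_def by linarith
        show "\<forall>u. length u = n \<longrightarrow> u \<in> Ham n {1, n} \<longrightarrow> G True a (k - c - 1) u \<in> P"
        proof (intro allI impI)
          fix u assume u: "length u = n" "u \<in> Ham n {1, n}"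
          then have "hweight u = 1 \<or> hweight u = n" unfolding Ham_def by auto
          then show "G True a (k - c - 1) u \<in> P"
          proof
            assume "hweight u = 1"
            then show ?thesis apply - apply (rule memP[OF i(2)]) using u(1) a1 a2 a3 ck
              unfolding hweight_G n_def a_def c_def by simp_all
          next
            assume "hweight u = n"
            then show ?thesis apply - apply (rule memP[OF i(1)]) using u(1) a1 a2 a3 ck
              unfolding hweight_G n_def a_def c_def by simp_all
          qed
        qed
        show "\<forall>u. length u = n \<longrightarrow> G True a (k - c - 1) u \<in> Q \<longrightarrow> u \<in> Ham n ({0..n} - {b})"
        proof (intro allI impI)
          fix u assume u: "length u = n" "G True a (k - c - 1) u \<in> Q"
          have "hweight u \<noteq> b" using notw[OF u(2)] u(1) hweight_le[of u] a1 a2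
            unfolding hweight_G b_def n_def a_def c_def by auto
          then show "u \<in> Ham n ({0..n} - {b})" using hweight_le[of u] u(1) unfolding Ham_def by simp
        qed
      qed (use key[OF that] Ham_len in auto)
      show ?thesis
        apply (rule exI[of _ n], rule exI, rule exI, rule conjI)
         apply (use inc in blast)
        apply (rule disjI2, rule exI[of _ b])
        using a1 a2 a3 by (auto simp: n_def a_def c_def b_def)
    qed
  qed
qed

end
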